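(* The restriction functor $R:\mathbb T({}_H\mathcal M)\to{}_H\mathcal M^{par}$, $R(M,T)=(T(M),\pi_T)$ (acting as the identity on morphisms), is an equivalence of categories.
   Context: Throughout, $k$ is a field and $H$ is a Hopf algebra over $k$ with bijective antipode $S$ and Sweedler notation $\Delta(h)=h_{(1)}\otimes h_{(2)}$. A partial representation of $H$ on a vector space $M$ is a linear map $\pi:H\to\mathrm{End}_k(M)$ satisfying, for all $h,k\in H$: - $\pi(1_H)=\mathrm{id}$; - $\pi(h)\pi(k_{(1)})\pi(S(k_{(2)}))=\pi(hk_{(1)})\pi(S(k_{(2)}))$; - $\pi(h_{(1)})\pi(S(h_{(2)}))\pi(k)=\pi(h_{(1)})\pi(S(h_{(2)})k)$; - $\pi(h)\pi(S(k_{(1)}))\pi(k_{(2)})=\pi(hS(k_{(1)}))\pi(k_{(2)})$; - $\pi(S(h_{(1)}))\pi(h_{(2)})\pi(k)=\pi(S(h_{(1)}))\pi(h_{(2)}k)$. The pair $(M,\pi)$ is then a partial $H$-module. Partial $H$-modules form the category ${}_H\mathcal M^{par}$, whose morphisms are linear maps $f$ with $f\circ\pi(h)=\pi'(h)\circ f$ for all $h$. For a left $H$-module $M$ (action $\triangleright$) and a linear $T:M\to M$, put $T_h(m)=h_{(1)}\triangleright T(S(h_{(2)})\triangleright m)$. A projection $T$ ($T^2=T$) satisfies the c-condition if $T_h\circ T=T\circ T_h$ for all $h\in H$. The category $\mathbb T({}_H\mathcal M)$ is defined as follows: - objects are pairs $(M,T)$ with $M$ a left $H$-module and $T$ a linear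 projection on $M$ satisfying the c-condition; - morphisms $f:(M,T)\to(N,S)$ are linear maps $f:T(M)\to S(N)$ with $f(T(h\triangleright m))=S(h\triangleright f(m))$ for all $h\in H$, $m\in T(M)$. For such $(M,T)$, $\pi_T(h)(m)=T(h\triangleright m)$ ($m\in T(M)$) makes $T(M)$ a partial $H$-module. *)

theory Defs
  imports Complex_Main "HOL-Library.Function_Algebras"
begin

text \<open>
  A k-vector space is an additive group type
  together with a scalar multiplication satisfying vector_space; subspaces are carrier sets.  Since there is no tensor product in the library,
  the comultiplication is given by a list of pairs representing Delta(h) as a finite sum of
  simple tensors (Sweedler notation); all identities in H (x) H and H (x) H (x) H are
  expressed by testing against all bilinear / trilinear forms (over a field, these separate
  the points of the tensor product).
\<close>

definition sweedler :: "('h \<Rightarrow> ('h \<times> 'h) list) \<Rightarrow> 'h \<Rightarrow> ('h \<Rightarrow> 'h \<Rightarrow> 'v::comm_monoid_add) \<Rightarrow> 'v"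
  where "sweedler cop h f = sum_list (map (\<lambda>(a, b). f a b) (cop h))"

definition bilinear_form :: "('k::field \<Rightarrow> 'h::ab_group_add \<Rightarrow> 'h) \<Rightarrow> ('h \<Rightarrow> 'h \<Rightarrow> 'k) \<Rightarrow> bool"
  where "bilinear_form sh \<beta> \<longleftrightarrow>
     (\<forall>a. Vector_Spaces.linear sh (*) (\<beta> a)) \<and> (\<forall>b. Vector_Spaces.linear sh (*) (\<lambda>a. \<beta> a b))"

definition trilinear_form :: "('k::field \<Rightarrow> 'h::ab_group_add \<Rightarrow> 'h) \<Rightarrow> ('h \<Rightarrow> 'h \<Rightarrow> 'h \<Rightarrow> 'k) \<Rightarrow> bool"
  where "trilinear_form sh \<tau> \<longleftrightarrow>
     (\<forall>a b. Vector_Spaces.linear sh (*) (\<tau> a b)) \<and>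
     (\<forall>a c. Vector_Spaces.linear sh (*) (\<lambda>b. \<tau> a b c)) \<and>
     (\<forall>b c. Vector_Spaces.linear sh (*) (\<lambda>a. \<tau> a b c))"

definition hopf_algebra ::
  "('k::field \<Rightarrow> 'h::ring_1 \<Rightarrow> 'h) \<Rightarrow> ('h \<Rightarrow> ('h \<times> 'h) list) \<Rightarrow> ('h \<Rightarrow> 'k) \<Rightarrow> ('h \<Rightarrow> 'h) \<Rightarrow> bool"
  where "hopf_algebra sh cop eps S \<longleftrightarrow>
     \<comment> \<open>k-algebra\<close>
     vector_space sh \<and>
     (\<forall>c a b. sh c (a * b) = sh c a * b \<and> sh c (a * b) = a * sh c b) \<and>
     \<comment> \<open>comultiplication is a linear map H \<rightarrow> H \<otimes> H\<close>
     (\<forall>\<beta>. bilinear_form sh \<beta> \<longrightarrow> Vector_Spaces.linear sh (*) (\<lambda>h. sweedler cop h \<beta>)) \<and>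
     \<comment> \<open>coassociativity\<close>
     (\<forall>\<tau> h. trilinear_form sh \<tau> \<longrightarrow>
        sweedler cop h (\<lambda>a b. sweedler cop a (\<lambda>c d. \<tau> c d b)) =
        sweedler cop h (\<lambda>a b. sweedler cop b (\<lambda>c d. \<tau> a c d))) \<and>
     \<comment> \<open>counit\<close>
     Vector_Spaces.linear sh (*) eps \<and>
     (\<forall>h. sweedler cop h (\<lambda>a b. sh (eps a) b) = h) \<and>
     (\<forall>h. sweedler cop h (\<lambda>a b. sh (eps b) a) = h) \<and>
     \<comment> \<open>comultiplication and counit are algebra maps\<close>
     (\<forall>\<beta>. bilinear_form sh \<beta> \<longrightarrow> sweedler cop 1 \<beta> = \<beta> 1 1) \<and>
     (\<forall>\<beta> h k. bilinear_form sh \<beta> \<longrightarrow>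
        sweedler cop (h * k) \<beta> =
        sweedler cop h (\<lambda>a b. sweedler cop k (\<lambda>c d. \<beta> (a * c) (b * d)))) \<and>
     eps 1 = 1 \<and> (\<forall>h k. eps (h * k) = eps h * eps k) \<and>
     \<comment> \<open>antipode\<close>
     Vector_Spaces.linear sh sh S \<and>
     (\<forall>h. sweedler cop h (\<lambda>a b. S a * b) = sh (eps h) 1) \<and>
     (\<forall>h. sweedler cop h (\<lambda>a b. a * S b) = sh (eps h) 1) \<and>
     \<comment> \<open>bijective antipode\<close>
     bij S"

definition linear_on ::
  "('k::field \<Rightarrow> 'a::ab_group_add \<Rightarrow> 'a) \<Rightarrow> 'a set \<Rightarrow> ('k \<Rightarrow> 'b::ab_group_add \<Rightarrow> 'b) \<Rightarrow> 'b set \<Rightarrow> ('a \<Rightarrow> 'b) \<Rightarrow> bool"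
  where "linear_on s1 A s2 B f \<longleftrightarrow>
     (\<forall>x\<in>A. f x \<in> B) \<and> (\<forall>x\<in>A. \<forall>y\<in>A. f (x + y) = f x + f y) \<and>
     (\<forall>c. \<forall>x\<in>A. f (s1 c x) = s2 c (f x))"

text \<open>Endomorphisms are compared pointwise on V.\<close>

definition partial_module ::
  "('k::field \<Rightarrow> 'h::ring_1 \<Rightarrow> 'h) \<Rightarrow> ('h \<Rightarrow> ('h \<times> 'h) list) \<Rightarrow> ('h \<Rightarrow> 'h) \<Rightarrow>
   ('k \<Rightarrow> 'v::ab_group_add \<Rightarrow> 'v) \<Rightarrow> 'v set \<Rightarrow> ('h \<Rightarrow> 'v \<Rightarrow> 'v) \<Rightarrow> bool"
  where "partial_module sh cop S sv V \<pi> \<longleftrightarrow>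
     vector_space sv \<and> module.subspace sv V \<and>
     (\<forall>h. linear_on sv V sv V (\<pi> h)) \<and>
     (\<forall>x\<in>V. \<forall>h k. \<pi> (h + k) x = \<pi> h x + \<pi> k x) \<and>
     (\<forall>x\<in>V. \<forall>c h. \<pi> (sh c h) x = sv c (\<pi> h x)) \<and>
     (\<forall>x\<in>V. \<pi> 1 x = x) \<and>
     (\<forall>x\<in>V. \<forall>h k.
        sweedler cop k (\<lambda>a b. \<pi> h (\<pi> a (\<pi> (S b) x))) =
        sweedler cop k (\<lambda>a b. \<pi> (h * a) (\<pi> (S b) x))) \<and>
     (\<forall>x\<in>V. \<forall>h k.
        sweedler cop h (\<lambda>a b. \<pi> a (\<pi> (S b) (\<pi> k x))) =
        sweedler cop h (\<lambda>a b. \<pi> a (\<pi> (S b * k) x))) \<and>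
     (\<forall>x\<in>V. \<forall>h k.
        sweedler cop k (\<lambda>a b. \<pi> h (\<pi> (S a) (\<pi> b x))) =
        sweedler cop k (\<lambda>a b. \<pi> (h * S a) (\<pi> b x))) \<and>
     (\<forall>x\<in>V. \<forall>h k.
        sweedler cop h (\<lambda>a b. \<pi> (S a) (\<pi> b (\<pi> k x))) =
        sweedler cop h (\<lambda>a b. \<pi> (S a) (\<pi> (b * k) x)))"

definition partial_module_hom ::
  "('k::field \<Rightarrow> 'v::ab_group_add \<Rightarrow> 'v) \<Rightarrow> 'v set \<Rightarrow> ('h \<Rightarrow> 'v \<Rightarrow> 'v) \<Rightarrow>
   ('k \<Rightarrow> 'w::ab_group_add \<Rightarrow> 'w) \<Rightarrow> 'w set \<Rightarrow> ('h \<Rightarrow> 'w \<Rightarrow> 'w) \<Rightarrow> ('v \<Rightarrow> 'w) \<Rightarrow> bool"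
  where "partial_module_hom sv V \<pi> sw W \<rho> f \<longleftrightarrow>
     linear_on sv V sw W f \<and> (\<forall>h. \<forall>x\<in>V. f (\<pi> h x) = \<rho> h (f x))"

definition partial_module_iso ::
  "('k::field \<Rightarrow> 'v::ab_group_add \<Rightarrow> 'v) \<Rightarrow> 'v set \<Rightarrow> ('h \<Rightarrow> 'v \<Rightarrow> 'v) \<Rightarrow>
   ('k \<Rightarrow> 'w::ab_group_add \<Rightarrow> 'w) \<Rightarrow> 'w set \<Rightarrow> ('h \<Rightarrow> 'w \<Rightarrow> 'w) \<Rightarrow> ('v \<Rightarrow> 'w) \<Rightarrow> bool"
  where "partial_module_iso sv V \<pi> sw W \<rho> f \<longleftrightarrow>
     partial_module_hom sv V \<pi> sw W \<rho> f \<and>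
     (\<exists>g. partial_module_hom sw W \<rho> sv V \<pi> g \<and>
          (\<forall>x\<in>V. g (f x) = x) \<and> (\<forall>y\<in>W. f (g y) = y))"

definition hmodule ::
  "('k::field \<Rightarrow> 'h::ring_1 \<Rightarrow> 'h) \<Rightarrow> ('k \<Rightarrow> 'm::ab_group_add \<Rightarrow> 'm) \<Rightarrow> 'm set \<Rightarrow> ('h \<Rightarrow> 'm \<Rightarrow> 'm) \<Rightarrow> bool"
  where "hmodule sh sm M act \<longleftrightarrow>
     vector_space sm \<and> module.subspace sm M \<and>
     (\<forall>h. linear_on sm M sm M (act h)) \<and>
     (\<forall>x\<in>M. \<forall>h k. act (h + k) x = act h x + act k x) \<and>
     (\<forall>x\<in>M. \<forall>c h. act (sh c h) x = sm c (act h x)) \<and>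
     (\<forall>x\<in>M. act 1 x = x) \<and>
     (\<forall>x\<in>M. \<forall>h k. act (h * k) x = act h (act k x))"

definition Tconj :: "('h \<Rightarrow> ('h \<times> 'h) list) \<Rightarrow> ('h \<Rightarrow> 'h) \<Rightarrow> ('h \<Rightarrow> 'm \<Rightarrow> 'm) \<Rightarrow> ('m \<Rightarrow> 'm)
    \<Rightarrow> 'h \<Rightarrow> 'm \<Rightarrow> 'm::comm_monoid_add"
  where "Tconj cop S act T h m = sweedler cop h (\<lambda>a b. act a (T (act (S b) m)))"

definition T_object ::
  "('k::field \<Rightarrow> 'h::ring_1 \<Rightarrow> 'h) \<Rightarrow> ('h \<Rightarrow> ('h \<times> 'h) list) \<Rightarrow> ('h \<Rightarrow> 'h) \<Rightarrow>
   ('k \<Rightarrow> 'm::ab_group_add \<Rightarrow> 'm) \<Rightarrow> 'm set \<Rightarrow> ('h \<Rightarrow> 'm \<Rightarrow> 'm) \<Rightarrow> ('m \<Rightarrow> 'm) \<Rightarrow> bool"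
  where "T_object sh cop S sm M act T \<longleftrightarrow>
     hmodule sh sm M act \<and> linear_on sm M sm M T \<and> (\<forall>x\<in>M. T (T x) = T x) \<and>
     (\<forall>h. \<forall>x\<in>M. Tconj cop S act T h (T x) = T (Tconj cop S act T h x))"

definition T_hom ::
  "('k::field \<Rightarrow> 'm::ab_group_add \<Rightarrow> 'm) \<Rightarrow> 'm set \<Rightarrow> ('h \<Rightarrow> 'm \<Rightarrow> 'm) \<Rightarrow> ('m \<Rightarrow> 'm) \<Rightarrow>
   ('k \<Rightarrow> 'n::ab_group_add \<Rightarrow> 'n) \<Rightarrow> 'n set \<Rightarrow> ('h \<Rightarrow> 'n \<Rightarrow> 'n) \<Rightarrow> ('n \<Rightarrow> 'n) \<Rightarrow> ('m \<Rightarrow> 'n) \<Rightarrow> bool"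
  where "T_hom sm M act T sn N act' T' f \<longleftrightarrow>
     linear_on sm (T ` M) sn (T' ` N) f \<and>
     (\<forall>h. \<forall>m\<in>T ` M. f (T (act h m)) = T' (act' h (f m)))"

definition piT :: "('h \<Rightarrow> 'm \<Rightarrow> 'm) \<Rightarrow> ('m \<Rightarrow> 'm) \<Rightarrow> 'h \<Rightarrow> 'm \<Rightarrow> 'm"
  where "piT act T h m = T (act h m)"

end

theory Submission
  imports Defs
begin


lemma vs_field: "vector_space ((*) :: 'k::field \<Rightarrow> 'k \<Rightarrow> 'k)"
  by unfold_locales (auto simp: algebra_simps)

lemma sep_functional:
  fixes s :: "'k::field \<Rightarrow> 'm::ab_group_add \<Rightarrow> 'm"
  assumes vs: "vector_space s" and x: "x \<noteq> 0"
  shows "\<exists>l. Vector_Spaces.linear s (*) l \<and> l x \<noteq> 0"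
proof -
  interpret vs: vector_space s by fact
  interpret p: vector_space_pair s "(*) :: 'k \<Rightarrow> 'k \<Rightarrow> 'k"
    using vs vs_field by (simp add: vector_space_pair_def)
  have ind: "vs.independent {x}"
    using x by (intro vs.independent_insertI) (auto simp: vs.span_empty vs.independent_empty)
  let ?l = "p.construct {x} (\<lambda>b. 1)"
  have "Vector_Spaces.linear s (*) ?l" by (rule p.linear_construct[OF ind])
  moreover have "?l x = 1" by (rule p.construct_basis[OF ind]) simp
  ultimately show ?thesis by (intro exI[of _ ?l]) simp
qed

lemma sep_eq:
  fixes s :: "'k::field \<Rightarrow> 'm::ab_group_add \<Rightarrow> 'm"
  assumes vs: "vector_space s" and h: "\<And>l. Vector_Spaces.linear s (*) l \<Longrightarrow> l x = l y"
  shows "x = y"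
proof (rule ccontr)
  assume "x \<noteq> y"
  then obtain l where l: "Vector_Spaces.linear s (*) l" "l (x - y) \<noteq> 0"
    using sep_functional[OF vs, of "x - y"] by auto
  interpret Vector_Spaces.linear s "(*)" l by fact
  have "l (x - y) = l x - l y" by (rule diff)
  with h[OF l(1)] l(2) show False by simp
qed


lemma sum_list_pull:
  assumes "\<forall>x\<in>A. \<forall>y\<in>A. g (x+y) = g x + g y" "g 0 = 0" "0 \<in> A" "\<forall>x\<in>A. \<forall>y\<in>A. x+y \<in> A"
    "\<forall>p\<in>set xs. f p \<in> A"
  shows "g (sum_list (map f xs)) = sum_list (map (\<lambda>p. g (f p)) xs) \<and> sum_list (map f xs) \<in> A"
  using assms(5) by (induction xs) (auto simp: assms(1-4))

lemma sweedler_pull: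
  assumes "\<forall>x\<in>A. \<forall>y\<in>A. g (x+y) = g x + g y" "g 0 = 0" "0 \<in> A" "\<forall>x\<in>A. \<forall>y\<in>A. x+y \<in> A"
    "\<And>a b. F a b \<in> A"
  shows "g (sweedler cop h F) = sweedler cop h (\<lambda>a b. g (F a b))"
  unfolding sweedler_def using sum_list_pull[of A g "cop h" "\<lambda>p. F (fst p) (snd p)"] assms
  by (simp add: split_def)

lemma sweedler_pullU:
  assumes "\<And>x y. g (x+y) = g x + g y" "g 0 = 0"
  shows "g (sweedler cop h F) = sweedler cop h (\<lambda>a b. g (F a b))"
  by (rule sweedler_pull[of UNIV]) (auto simp: assms)

lemma sweedler_in:
  assumes "0 \<in> A" "\<forall>x\<in>A. \<forall>y\<in>A. x+y \<in> A" "\<And>a b. F a b \<in> A"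
  shows "sweedler cop h F \<in> A"
  unfolding sweedler_def using sum_list_pull[of A id "cop h" "\<lambda>p. F (fst p) (snd p)"] assms
  by (simp add: split_def)

lemma sweedler_add: "sweedler cop h (\<lambda>a b. F a b + G a b) = sweedler cop h F + sweedler cop h G"
  unfolding sweedler_def by (simp add: split_def sum_list_addf)

lemma sweedler_zero: "sweedler cop h (\<lambda>a b. 0) = 0"
  unfolding sweedler_def by (induction "cop h") auto

lemma sum_list_apply: "(sum_list (map f xs)) j = sum_list (map (\<lambda>p. f p j) xs)"
  by (induction xs) auto

lemma sweedler_apply: "(sweedler cop h F) j = sweedler cop h (\<lambda>a b. F a b j)"
  unfolding sweedler_def by (simp add: split_def sum_list_apply)

lemma sum_list_swap_aux:
  "sum_list (map (\<lambda>p. sweedler cop k (\<lambda>c d. F p c d)) xs) =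
     sweedler cop k (\<lambda>c d. sum_list (map (\<lambda>p. F p c d) xs))"
  by (induction xs) (simp_all add: sweedler_add sweedler_zero)

lemma sweedler_swap:
  "sweedler cop h (\<lambda>a b. sweedler cop k (\<lambda>c d. F a b c d)) = sweedler cop k (\<lambda>c d. sweedler cop h (\<lambda>a b. F a b c d))"
  unfolding sweedler_def[of cop h] using sum_list_swap_aux[of cop k "\<lambda>p c d. F (fst p) (snd p) c d" "cop h"]
  by (simp add: split_def)


definition tri :: "('k::field \<Rightarrow> 'h::ab_group_add \<Rightarrow> 'h) \<Rightarrow> ('k \<Rightarrow> 'm::ab_group_add \<Rightarrow> 'm) \<Rightarrow> ('h \<Rightarrow> 'h \<Rightarrow> 'h \<Rightarrow> 'm) \<Rightarrow> bool"
  where "tri sh s \<Phi> \<longleftrightarrow>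
    (\<forall>a a' b c. \<Phi> (a + a') b c = \<Phi> a b c + \<Phi> a' b c) \<and> (\<forall>r a b c. \<Phi> (sh r a) b c = s r (\<Phi> a b c)) \<and>
    (\<forall>a b b' c. \<Phi> a (b + b') c = \<Phi> a b c + \<Phi> a b' c) \<and> (\<forall>r a b c. \<Phi> a (sh r b) c = s r (\<Phi> a b c)) \<and>
    (\<forall>a b c c'. \<Phi> a b (c + c') = \<Phi> a b c + \<Phi> a b c') \<and> (\<forall>r a b c. \<Phi> a b (sh r c) = s r (\<Phi> a b c))"

definition bi :: "('k::field \<Rightarrow> 'h::ab_group_add \<Rightarrow> 'h) \<Rightarrow> ('k \<Rightarrow> 'm::ab_group_add \<Rightarrow> 'm) \<Rightarrow> ('h \<Rightarrow> 'h \<Rightarrow> 'm) \<Rightarrow> bool"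
  where "bi sh s \<Phi> \<longleftrightarrow>
    (\<forall>a a' b. \<Phi> (a + a') b = \<Phi> a b + \<Phi> a' b) \<and> (\<forall>r a b. \<Phi> (sh r a) b = s r (\<Phi> a b)) \<and>
    (\<forall>a b b'. \<Phi> a (b + b') = \<Phi> a b + \<Phi> a b') \<and> (\<forall>r a b. \<Phi> a (sh r b) = s r (\<Phi> a b))"

context
  fixes sh :: "'k::field \<Rightarrow> 'h::ring_1 \<Rightarrow> 'h" and cop eps S
  assumes hopf: "hopf_algebra sh cop eps S"
begin

lemma hvs: "vector_space sh" using hopf by (simp add: hopf_algebra_def)
lemma hsmult: "sh c (a * b) = sh c a * b" "sh c (a * b) = a * sh c b"
  using hopf unfolding hopf_algebra_def by blast+
lemma hlin: "bilinear_form sh \<beta> \<Longrightarrow> Vector_Spaces.linear sh (*) (\<lambda>h. sweedler cop h \<beta>)"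
  using hopf unfolding hopf_algebra_def by blast
lemma hcoassoc: "trilinear_form sh \<tau> \<Longrightarrow>
        sweedler cop h (\<lambda>a b. sweedler cop a (\<lambda>c d. \<tau> c d b)) =
        sweedler cop h (\<lambda>a b. sweedler cop b (\<lambda>c d. \<tau> a c d))"
  using hopf unfolding hopf_algebra_def by blast
lemma hcounit: "sweedler cop h (\<lambda>a b. sh (eps a) b) = h" "sweedler cop h (\<lambda>a b. sh (eps b) a) = h"
  using hopf unfolding hopf_algebra_def by blast+
lemma hantipode: "sweedler cop h (\<lambda>a b. S a * b) = sh (eps h) 1" "sweedler cop h (\<lambda>a b. a * S b) = sh (eps h) 1"
  using hopf by (simp_all add: hopf_algebra_def)
lemma hS: "S (a + b) = S a + S b" "S (sh c a) = sh c (S a)"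
  using hopf by (simp_all add: hopf_algebra_def Vector_Spaces.linear_iff)

lemma lin_facts:
  assumes "Vector_Spaces.linear s (*) l"
  shows "l (x + y) = l x + l y" "l (s c x) = c * l x" "l 0 = 0"
proof -
  interpret Vector_Spaces.linear s "(*)" l by fact
  show "l (x + y) = l x + l y" "l (s c x) = c * l x" "l 0 = 0" by (simp_all add: add scale)
qed

lemma coassocM:
  fixes s :: "'k \<Rightarrow> 'm::ab_group_add \<Rightarrow> 'm"
  assumes vs: "vector_space s" and t: "tri sh s \<Phi>"
  shows "sweedler cop h (\<lambda>a b. sweedler cop a (\<lambda>c d. \<Phi> c d b)) =
         sweedler cop h (\<lambda>a b. sweedler cop b (\<lambda>c d. \<Phi> a c d))"
proof (rule sep_eq[OF vs])
  fix l assume l: "Vector_Spaces.linear s (*) l"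
  note lf = lin_facts[OF l]
  have tf: "trilinear_form sh (\<lambda>a b c. l (\<Phi> a b c))"
    using t hvs vs_field unfolding trilinear_form_def Vector_Spaces.linear_iff tri_def by (simp add: lf)
  have pl: "\<And>h F. l (sweedler cop h F) = sweedler cop h (\<lambda>a b. l (F a b))"
    by (rule sweedler_pullU) (simp_all add: lf)
  show "l (sweedler cop h (\<lambda>a b. sweedler cop a (\<lambda>c d. \<Phi> c d b))) =
         l (sweedler cop h (\<lambda>a b. sweedler cop b (\<lambda>c d. \<Phi> a c d)))"
    using hcoassoc[OF tf, of h] by (simp add: pl)
qed

lemma linM:
  fixes s :: "'k \<Rightarrow> 'm::ab_group_add \<Rightarrow> 'm"
  assumes vs: "vector_space s" and t: "bi sh s \<Phi>"
  shows "sweedler cop (x + y) \<Phi> = sweedler cop x \<Phi> + sweedler cop y \<Phi>"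
    and "sweedler cop (sh r x) \<Phi> = s r (sweedler cop x \<Phi>)"
proof -
  interpret vs: vector_space s by fact
  { fix l assume l: "Vector_Spaces.linear s (*) l"
    note lf = lin_facts[OF l]
    have bf: "bilinear_form sh (\<lambda>a b. l (\<Phi> a b))"
      using t hvs vs_field unfolding bilinear_form_def Vector_Spaces.linear_iff bi_def by (simp add: lf)
    have pl: "\<And>h F. l (sweedler cop h F) = sweedler cop h (\<lambda>a b. l (F a b))"
      by (rule sweedler_pullU) (simp_all add: lf)
    have ll: "Vector_Spaces.linear sh (*) (\<lambda>h. sweedler cop h (\<lambda>a b. l (\<Phi> a b)))"
      by (rule hlin[OF bf])
    have "l (sweedler cop (x + y) \<Phi>) = l (sweedler cop x \<Phi> + sweedler cop y \<Phi>)"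
      using ll unfolding Vector_Spaces.linear_iff by (simp add: pl lf)
    moreover have "l (sweedler cop (sh r x) \<Phi>) = l (s r (sweedler cop x \<Phi>))"
      using ll unfolding Vector_Spaces.linear_iff by (simp add: pl lf)
    ultimately have "l (sweedler cop (x + y) \<Phi>) = l (sweedler cop x \<Phi> + sweedler cop y \<Phi>)"
       "l (sweedler cop (sh r x) \<Phi>) = l (s r (sweedler cop x \<Phi>))" by auto }
  then show "sweedler cop (x + y) \<Phi> = sweedler cop x \<Phi> + sweedler cop y \<Phi>"
    and "sweedler cop (sh r x) \<Phi> = s r (sweedler cop x \<Phi>)"
    by (auto intro: sep_eq[OF vs])
qed

lemma linM_zero:
  fixes s :: "'k \<Rightarrow> 'm::ab_group_add \<Rightarrow> 'm"
  assumes vs: "vector_space s" and t: "bi sh s \<Phi>"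
  shows "sweedler cop 0 \<Phi> = 0"
proof -
  interpret vs: vector_space s by fact
  interpret hv: vector_space sh by (rule hvs)
  have "sweedler cop 0 \<Phi> = sweedler cop (sh 0 0) \<Phi>" by simp
  also have "\<dots> = s 0 (sweedler cop 0 \<Phi>)" by (rule linM(2)[OF vs t])
  finally show ?thesis by simp
qed

lemma linM_sweedler:
  fixes s :: "'k \<Rightarrow> 'm::ab_group_add \<Rightarrow> 'm"
  assumes vs: "vector_space s" and t: "bi sh s \<Phi>"
  shows "sweedler cop (sweedler cop k F) \<Phi> = sweedler cop k (\<lambda>a b. sweedler cop (F a b) \<Phi>)"
  by (rule sweedler_pullU) (simp_all add: linM[OF vs t] linM_zero[OF vs t])

end



context
  fixes sh :: "'k::field \<Rightarrow> 'h::ring_1 \<Rightarrow> 'h" and cop eps S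
    and sm :: "'k \<Rightarrow> 'm::ab_group_add \<Rightarrow> 'm" and M act T
  assumes hopf: "hopf_algebra sh cop eps S" and TO: "T_object sh cop S sm M act T"
begin

lemma vsm: "vector_space sm" using TO by (simp add: T_object_def hmodule_def)
lemma modm: "module sm" using vsm by (simp add: module_iff_vector_space)
lemma subM: "module.subspace sm M" using TO by (simp add: T_object_def hmodule_def)
lemma M0[simp]: "0 \<in> M" using subM by (simp add: module.subspace_def[OF modm])
lemma Madd[simp]: "x \<in> M \<Longrightarrow> y \<in> M \<Longrightarrow> x + y \<in> M"
  using subM by (simp add: module.subspace_def[OF modm])
lemma Msc[simp]: "x \<in> M \<Longrightarrow> sm c x \<in> M"
  using subM by (simp add: module.subspace_def[OF modm])
lemma hm: "hmodule sh sm M act" using TO by (simp add: T_object_def)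
lemma act_M[simp]: "x \<in> M \<Longrightarrow> act h x \<in> M"
  using hm by (simp add: hmodule_def linear_on_def)
lemma act_add[simp]: "x \<in> M \<Longrightarrow> y \<in> M \<Longrightarrow> act h (x + y) = act h x + act h y"
  using hm by (simp add: hmodule_def linear_on_def)
lemma act_sc[simp]: "x \<in> M \<Longrightarrow> act h (sm c x) = sm c (act h x)"
  using hm by (simp add: hmodule_def linear_on_def)
lemma act_hadd[simp]: "x \<in> M \<Longrightarrow> act (h + k) x = act h x + act k x"
  using hm by (simp add: hmodule_def)
lemma act_hsc[simp]: "x \<in> M \<Longrightarrow> act (sh c h) x = sm c (act h x)"
  using hm by (simp add: hmodule_def)
lemma act_one[simp]: "x \<in> M \<Longrightarrow> act 1 x = x"
  using hm by (simp add: hmodule_def)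
lemma act_mult: "x \<in> M \<Longrightarrow> act (h * k) x = act h (act k x)"
  using hm by (simp add: hmodule_def)
lemma T_M[simp]: "x \<in> M \<Longrightarrow> T x \<in> M"
  using TO by (simp add: T_object_def linear_on_def)
lemma T_add[simp]: "x \<in> M \<Longrightarrow> y \<in> M \<Longrightarrow> T (x + y) = T x + T y"
  using TO by (simp add: T_object_def linear_on_def)
lemma T_sc[simp]: "x \<in> M \<Longrightarrow> T (sm c x) = sm c (T x)"
  using TO by (simp add: T_object_def linear_on_def)
lemma T_idem[simp]: "x \<in> M \<Longrightarrow> T (T x) = T x"
  using TO by (simp add: T_object_def)
lemma T_c: "x \<in> M \<Longrightarrow> Tconj cop S act T h (T x) = T (Tconj cop S act T h x)"
  using TO by (simp add: T_object_def)
lemma act_0[simp]: "act h 0 = 0"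
  using act_add[of 0 0 h] by simp
lemma T_0[simp]: "T 0 = 0"
  using T_add[of 0 0] by simp
lemma act_h0[simp]: "x \<in> M \<Longrightarrow> act 0 x = 0"
  using act_hadd[of x 0 0] by simp

lemma sw_M[simp]: "(\<And>a b. F a b \<in> M) \<Longrightarrow> sweedler cop h F \<in> M"
  by (rule sweedler_in) auto
lemma Tconj_M[simp]: "x \<in> M \<Longrightarrow> Tconj cop S act T h x \<in> M"
  unfolding Tconj_def by simp
lemma T_sw: "(\<And>a b. F a b \<in> M) \<Longrightarrow> T (sweedler cop h F) = sweedler cop h (\<lambda>a b. T (F a b))"
  by (rule sweedler_pull[of M]) auto
lemma act_sw: "(\<And>a b. F a b \<in> M) \<Longrightarrow> act k (sweedler cop h F) = sweedler cop h (\<lambda>a b. act k (F a b))"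
  by (rule sweedler_pull[of M]) auto
lemma sm_sw: "sm c (sweedler cop h F) = sweedler cop h (\<lambda>a b. sm c (F a b))"
  by (rule sweedler_pullU) (simp_all add: modm module.scale_right_distrib module.scale_zero_right)
lemma act_swH: "y \<in> M \<Longrightarrow> act (sweedler cop h F) y = sweedler cop h (\<lambda>a b. act (F a b) y)"
  by (rule sweedler_pullU) simp_all

lemma lemA:
  assumes y: "y \<in> M"
  shows "act h (T y) = sweedler cop h (\<lambda>a b. Tconj cop S act T a (act b y))"
proof -
  have t: "tri sh sm (\<lambda>c d b. act c (T (act (S d) (act b y))))"
    using y unfolding tri_def by (simp add: hS[OF hopf])
  have "sweedler cop h (\<lambda>a b. Tconj cop S act T a (act b y)) =
        sweedler cop h (\<lambda>a b. sweedler cop a (\<lambda>c d. act c (T (act (S d) (act b y)))))"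
    by (simp add: Tconj_def)
  also have "\<dots> = sweedler cop h (\<lambda>a b. sweedler cop b (\<lambda>c d. act a (T (act (S c) (act d y)))))"
    by (rule coassocM[OF hopf vsm t])
  also have "\<dots> = sweedler cop h (\<lambda>a b. sweedler cop b (\<lambda>c d. act a (T (act (S c * d) y))))"
    using y by (simp add: act_mult)
  also have "\<dots> = sweedler cop h (\<lambda>a b. act a (T (act (sweedler cop b (\<lambda>c d. S c * d)) y)))"
    using y by (subst act_swH) (simp_all add: T_sw act_sw)
  also have "\<dots> = sweedler cop h (\<lambda>a b. act (sh (eps b) a) (T y))"
    using y by (simp add: hantipode[OF hopf])
  also have "\<dots> = act (sweedler cop h (\<lambda>a b. sh (eps b) a)) (T y)"
    using y by (simp add: act_swH)
  also have "\<dots> = act h (T y)" by (simp add: hcounit[OF hopf])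
  finally show ?thesis by simp
qed

lemma biTheta: "x \<in> M \<Longrightarrow> bi sh sm (\<lambda>e f. T (act (S e) (T (act f x))))"
  unfolding bi_def by (simp add: hS[OF hopf])

lemma lemB:
  assumes x: "x \<in> M"
  shows "sweedler cop k (\<lambda>a b. act (S a) (T (act b (T x)))) =
         sweedler cop k (\<lambda>a b. T (act (S a) (T (act b x))))"
proof -
  define \<Theta> where "\<Theta> = (\<lambda>e f. T (act (S e) (T (act f x))))"
  have \<Theta>M[simp]: "\<Theta> e f \<in> M" for e f using x by (simp add: \<Theta>_def)
  have bT: "bi sh sm \<Theta>" unfolding \<Theta>_def by (rule biTheta[OF x])
  define N where "N = (\<lambda>a c d. sweedler cop d (\<lambda>e f. act (S a * c) (\<Theta> e f)))"
  have s1: "act (S a) (T (act b (T x))) =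
      sweedler cop b (\<lambda>c d. sweedler cop c (\<lambda>e f. act (S a * e) (T (act (S f) (T (act d x))))))" for a b
  proof -
    have "act (S a) (T (act b (T x))) = act (S a) (T (sweedler cop b (\<lambda>c d. Tconj cop S act T c (act d x))))"
      using lemA[OF x] by simp
    also have "\<dots> = act (S a) (sweedler cop b (\<lambda>c d. Tconj cop S act T c (T (act d x))))"
      using x by (simp add: T_sw T_c)
    also have "\<dots> = sweedler cop b (\<lambda>c d. sweedler cop c (\<lambda>e f. act (S a * e) (T (act (S f) (T (act d x))))))"
      using x by (simp add: Tconj_def act_sw act_mult)
    finally show ?thesis .
  qed
  have s2: "sweedler cop b (\<lambda>c d. sweedler cop c (\<lambda>e f. act (S a * e) (T (act (S f) (T (act d x)))))) =
            sweedler cop b (\<lambda>c d. N a c d)" for a b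
  proof -
    have t: "tri sh sm (\<lambda>e f d. act (S a * e) (T (act (S f) (T (act d x)))))"
      using x unfolding tri_def by (simp add: hS[OF hopf] distrib_left hsmult(2)[OF hopf, symmetric])
    show ?thesis using coassocM[OF hopf vsm t, of b] by (simp add: N_def \<Theta>_def)
  qed
  have bN: "bi sh sm (\<lambda>e f. act g (\<Theta> e f))" for g
    using bT unfolding bi_def by simp
  have tN: "tri sh sm N"
    unfolding tri_def N_def
    by (simp add: hS[OF hopf] distrib_left distrib_right hsmult(2)[OF hopf, symmetric]
        hsmult(1)[OF hopf, symmetric] sweedler_add sm_sw linM[OF hopf vsm bN])
  have s4: "sweedler cop a (\<lambda>c d. N c d b) = sweedler cop (sh (eps a) b) \<Theta>" for a b
  proof -
    have "sweedler cop a (\<lambda>c d. N c d b) = sweedler cop b (\<lambda>e f. sweedler cop a (\<lambda>c d. act (S c * d) (\<Theta> e f)))"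
      unfolding N_def by (rule sweedler_swap)
    also have "\<dots> = sweedler cop b (\<lambda>e f. act (sweedler cop a (\<lambda>c d. S c * d)) (\<Theta> e f))"
      by (simp add: act_swH)
    also have "\<dots> = sm (eps a) (sweedler cop b \<Theta>)"
      by (simp add: hantipode[OF hopf] sm_sw)
    also have "\<dots> = sweedler cop (sh (eps a) b) \<Theta>"
      by (simp add: linM[OF hopf vsm bT])
    finally show ?thesis .
  qed
  have "sweedler cop k (\<lambda>a b. act (S a) (T (act b (T x)))) = sweedler cop k (\<lambda>a b. sweedler cop b (\<lambda>c d. N a c d))"
    by (simp add: s1 s2)
  also have "\<dots> = sweedler cop k (\<lambda>a b. sweedler cop a (\<lambda>c d. N c d b))"
    by (rule coassocM[OF hopf vsm tN, symmetric])
  also have "\<dots> = sweedler cop k (\<lambda>a b. sweedler cop (sh (eps a) b) \<Theta>)"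
    by (simp add: s4)
  also have "\<dots> = sweedler cop (sweedler cop k (\<lambda>a b. sh (eps a) b)) \<Theta>"
    by (rule linM_sweedler[OF hopf vsm bT, symmetric])
  also have "\<dots> = sweedler cop k \<Theta>" by (simp add: hcounit[OF hopf])
  finally show ?thesis by (simp add: \<Theta>_def)
qed

lemma ax1:
  assumes x: "x \<in> M" "T x = x"
  shows "sweedler cop k (\<lambda>a b. T (act h (T (act a (T (act (S b) x)))))) =
         sweedler cop k (\<lambda>a b. T (act (h * a) (T (act (S b) x))))"
proof -
  have "sweedler cop k (\<lambda>a b. T (act h (T (act a (T (act (S b) x)))))) = T (act h (T (Tconj cop S act T k x)))"
    using x by (simp add: Tconj_def T_sw act_sw)
  also have "T (Tconj cop S act T k x) = Tconj cop S act T k x"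
    using T_c[OF x(1), of k] x by simp
  also have "T (act h (Tconj cop S act T k x)) = sweedler cop k (\<lambda>a b. T (act (h * a) (T (act (S b) x))))"
    using x by (simp add: Tconj_def T_sw act_sw act_mult)
  finally show ?thesis .
qed

lemma ax2:
  assumes x: "x \<in> M"
  shows "sweedler cop h (\<lambda>a b. T (act a (T (act (S b) (T (act k x)))))) =
         sweedler cop h (\<lambda>a b. T (act a (T (act (S b * k) x))))"
proof -
  have "sweedler cop h (\<lambda>a b. T (act a (T (act (S b) (T (act k x)))))) = T (Tconj cop S act T h (T (act k x)))"
    using x by (simp add: Tconj_def T_sw act_sw)
  also have "\<dots> = T (Tconj cop S act T h (act k x))"
    using T_c[of "act k x" h] x by simp
  also have "\<dots> = sweedler cop h (\<lambda>a b. T (act a (T (act (S b * k) x))))"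
    using x by (simp add: Tconj_def T_sw act_sw act_mult)
  finally show ?thesis .
qed

lemma ax3:
  assumes x: "x \<in> M" "T x = x"
  shows "sweedler cop k (\<lambda>a b. T (act h (T (act (S a) (T (act b x)))))) =
         sweedler cop k (\<lambda>a b. T (act (h * S a) (T (act b x))))"
proof -
  have B: "sweedler cop k (\<lambda>a b. act (S a) (T (act b x))) = T (sweedler cop k (\<lambda>a b. act (S a) (T (act b x))))"
    using lemB[OF x(1), of k] x by (simp add: T_sw)
  have "sweedler cop k (\<lambda>a b. T (act h (T (act (S a) (T (act b x)))))) =
        T (act h (T (sweedler cop k (\<lambda>a b. act (S a) (T (act b x))))))"
    using x by (simp add: T_sw act_sw)
  also have "\<dots> = T (act h (sweedler cop k (\<lambda>a b. act (S a) (T (act b x)))))"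
    using B by simp
  also have "\<dots> = sweedler cop k (\<lambda>a b. T (act (h * S a) (T (act b x))))"
    using x by (simp add: T_sw act_sw act_mult)
  finally show ?thesis .
qed

lemma ax4:
  assumes x: "x \<in> M"
  shows "sweedler cop h (\<lambda>a b. T (act (S a) (T (act b (T (act k x)))))) =
         sweedler cop h (\<lambda>a b. T (act (S a) (T (act (b * k) x))))"
proof -
  have "sweedler cop h (\<lambda>a b. T (act (S a) (T (act b (T (act k x)))))) =
        T (sweedler cop h (\<lambda>a b. act (S a) (T (act b (T (act k x))))))"
    using x by (simp add: T_sw)
  also have "\<dots> = T (sweedler cop h (\<lambda>a b. T (act (S a) (T (act b (act k x))))))"
    using lemB[of "act k x" h] x by simp
  also have "\<dots> = sweedler cop h (\<lambda>a b. T (act (S a) (T (act (b * k) x))))"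
    using x by (simp add: T_sw act_mult)
  finally show ?thesis .
qed

lemma part1: "partial_module sh cop S sm (T ` M) (piT act T)"
proof -
  have TM: "x \<in> T ` M \<longleftrightarrow> x \<in> M \<and> T x = x" for x
    by (auto intro: image_eqI[of x T x])
  have sub: "module.subspace sm (T ` M)"
    unfolding module.subspace_def[OF modm]
  proof (intro conjI ballI allI)
    show "0 \<in> T ` M" by (rule image_eqI[of 0 T 0]) simp_all
    show "x + y \<in> T ` M" if "x \<in> T ` M" "y \<in> T ` M" for x y
      using that by (auto simp: TM)
    show "sm c x \<in> T ` M" if "x \<in> T ` M" for c x
      using that by (auto simp: TM)
  qed
  show ?thesis
    unfolding partial_module_def
  proof (intro conjI ballI allI)
    show "vector_space sm" by (rule vsm)
    show "module.subspace sm (T ` M)" by (rule sub)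
    show "linear_on sm (T ` M) sm (T ` M) (piT act T h)" for h
      unfolding linear_on_def piT_def by (auto simp: TM)
  qed (auto simp: TM piT_def ax1 ax2 ax3 ax4)
qed

end


inductive_set Mset :: "'v::ab_group_add set \<Rightarrow> ('h::ring_1 \<Rightarrow> 'v \<Rightarrow> 'v) \<Rightarrow> ('h \<Rightarrow> 'v) set"
  for V \<pi> where
  Mz: "0 \<in> Mset V \<pi>"
| Mg: "v \<in> V \<Longrightarrow> (\<lambda>k. \<pi> (k * g) v) \<in> Mset V \<pi>"
| Ma: "\<phi> \<in> Mset V \<pi> \<Longrightarrow> \<psi> \<in> Mset V \<pi> \<Longrightarrow> \<phi> + \<psi> \<in> Mset V \<pi>"

definition smf :: "('k \<Rightarrow> 'v \<Rightarrow> 'v) \<Rightarrow> 'k \<Rightarrow> ('h \<Rightarrow> 'v) \<Rightarrow> ('h \<Rightarrow> 'v)"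
  where "smf sv c \<phi> = (\<lambda>k. sv c (\<phi> k))"
definition actf :: "'h::times \<Rightarrow> ('h \<Rightarrow> 'v) \<Rightarrow> ('h \<Rightarrow> 'v)"
  where "actf h \<phi> = (\<lambda>k. \<phi> (k * h))"
definition Tf :: "('h::one \<Rightarrow> 'v \<Rightarrow> 'v) \<Rightarrow> ('h \<Rightarrow> 'v) \<Rightarrow> ('h \<Rightarrow> 'v)"
  where "Tf \<pi> \<phi> = (\<lambda>k. \<pi> k (\<phi> 1))"

context
  fixes sh :: "'k::field \<Rightarrow> 'h::ring_1 \<Rightarrow> 'h" and cop eps S
    and sv :: "'k \<Rightarrow> 'v::ab_group_add \<Rightarrow> 'v" and V \<pi>
  assumes hopf: "hopf_algebra sh cop eps S" and PM: "partial_module sh cop S sv V \<pi>"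
begin

lemma vsv: "vector_space sv" using PM by (simp add: partial_module_def)
lemma modv: "module sv" using vsv by (simp add: module_iff_vector_space)
lemma subV: "module.subspace sv V" using PM by (simp add: partial_module_def)
lemma V0[simp]: "0 \<in> V" using subV by (simp add: module.subspace_def[OF modv])
lemma Vadd[simp]: "x \<in> V \<Longrightarrow> y \<in> V \<Longrightarrow> x + y \<in> V"
  using subV by (simp add: module.subspace_def[OF modv])
lemma Vsc[simp]: "x \<in> V \<Longrightarrow> sv c x \<in> V"
  using subV by (simp add: module.subspace_def[OF modv])
lemma pi_V[simp]: "x \<in> V \<Longrightarrow> \<pi> h x \<in> V"
  using PM by (simp add: partial_module_def linear_on_def)
lemma pi_add[simp]: "x \<in> V \<Longrightarrow> y \<in> V \<Longrightarrow> \<pi> h (x + y) = \<pi> h x + \<pi> h y"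
  using PM by (simp add: partial_module_def linear_on_def)
lemma pi_sc[simp]: "x \<in> V \<Longrightarrow> \<pi> h (sv c x) = sv c (\<pi> h x)"
  using PM by (simp add: partial_module_def linear_on_def)
lemma pi_hadd[simp]: "x \<in> V \<Longrightarrow> \<pi> (h + k) x = \<pi> h x + \<pi> k x"
  using PM by (simp add: partial_module_def)
lemma pi_hsc[simp]: "x \<in> V \<Longrightarrow> \<pi> (sh c h) x = sv c (\<pi> h x)"
  using PM by (simp add: partial_module_def)
lemma pi_one[simp]: "x \<in> V \<Longrightarrow> \<pi> 1 x = x"
  using PM by (simp add: partial_module_def)
lemma pi_ax1: "x \<in> V \<Longrightarrow> sweedler cop k (\<lambda>a b. \<pi> h (\<pi> a (\<pi> (S b) x))) =
        sweedler cop k (\<lambda>a b. \<pi> (h * a) (\<pi> (S b) x))"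
  using PM unfolding partial_module_def by blast
lemma pi_ax2: "x \<in> V \<Longrightarrow> sweedler cop h (\<lambda>a b. \<pi> a (\<pi> (S b) (\<pi> k x))) =
        sweedler cop h (\<lambda>a b. \<pi> a (\<pi> (S b * k) x))"
  using PM unfolding partial_module_def by blast
lemma pi_0[simp]: "\<pi> h 0 = 0" using pi_add[of 0 0 h] by simp
lemma sv0[simp]: "sv c 0 = 0" by (rule module.scale_zero_right[OF modv])

lemma swV[simp]: "(\<And>a b. F a b \<in> V) \<Longrightarrow> sweedler cop h F \<in> V"
  by (rule sweedler_in) auto
lemma pi_sw: "(\<And>a b. F a b \<in> V) \<Longrightarrow> \<pi> j (sweedler cop h F) = sweedler cop h (\<lambda>a b. \<pi> j (F a b))"
  by (rule sweedler_pull[of V]) auto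

lemma M_props:
  assumes "\<phi> \<in> Mset V \<pi>"
  shows "(\<forall>x. \<phi> x \<in> V) \<and> (\<forall>x y. \<phi> (x + y) = \<phi> x + \<phi> y) \<and> (\<forall>c x. \<phi> (sh c x) = sv c (\<phi> x)) \<and>
    (\<forall>j h. \<pi> j (sweedler cop h (\<lambda>a b. \<pi> a (\<phi> (S b)))) = sweedler cop h (\<lambda>a b. \<pi> (j * a) (\<pi> (S b) (\<phi> 1))))"
  using assms
proof induction
  case Mz
  then show ?case by (simp add: sweedler_zero)
next
  case (Mg v g)
  have P4: "\<pi> j (sweedler cop h (\<lambda>a b. \<pi> a (\<pi> (S b * g) v))) = sweedler cop h (\<lambda>a b. \<pi> (j * a) (\<pi> (S b) (\<pi> g v)))"
    for j h
  proof -
    have "\<pi> j (sweedler cop h (\<lambda>a b. \<pi> a (\<pi> (S b * g) v))) = \<pi> j (sweedler cop h (\<lambda>a b. \<pi> a (\<pi> (S b) (\<pi> g v))))"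
      using pi_ax2[OF Mg, of h g] by simp
    also have "\<dots> = sweedler cop h (\<lambda>a b. \<pi> j (\<pi> a (\<pi> (S b) (\<pi> g v))))"
      using Mg by (simp add: pi_sw)
    also have "\<dots> = sweedler cop h (\<lambda>a b. \<pi> (j * a) (\<pi> (S b) (\<pi> g v)))"
      using pi_ax1[of "\<pi> g v" h j] Mg by simp
    finally show ?thesis .
  qed
  show ?case using Mg P4
    by (simp add: distrib_right hsmult(1)[OF hopf, symmetric])
next
  case (Ma \<phi> \<psi>)
  then show ?case by (simp add: sweedler_add pi_sw module.scale_right_distrib[OF modv] algebra_simps)
qed

lemma MV[simp]: "\<phi> \<in> Mset V \<pi> \<Longrightarrow> \<phi> x \<in> V" using M_props by blast
lemma Madd': "\<phi> \<in> Mset V \<pi> \<Longrightarrow> \<phi> (x + y) = \<phi> x + \<phi> y" using M_props by blast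
lemma Msc': "\<phi> \<in> Mset V \<pi> \<Longrightarrow> \<phi> (sh c x) = sv c (\<phi> x)" using M_props by blast
lemma MP4: "\<phi> \<in> Mset V \<pi> \<Longrightarrow> \<pi> j (sweedler cop h (\<lambda>a b. \<pi> a (\<phi> (S b)))) = sweedler cop h (\<lambda>a b. \<pi> (j * a) (\<pi> (S b) (\<phi> 1)))"
  using M_props by blast

lemma M_smf: "\<phi> \<in> Mset V \<pi> \<Longrightarrow> smf sv c \<phi> \<in> Mset V \<pi>"
proof (induction rule: Mset.induct)
  case Mz
  then show ?case by (simp add: smf_def zero_fun_def[symmetric] Mset.Mz)
next
  case (Mg v g)
  then show ?case using Mset.Mg[where V=V and \<pi>=\<pi> and v="sv c v" and g=g] by (simp add: smf_def)
next
  case (Ma \<phi> \<psi>)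
  have "smf sv c (\<phi> + \<psi>) = smf sv c \<phi> + smf sv c \<psi>"
    by (simp add: smf_def fun_eq_iff module.scale_right_distrib[OF modv])
  then show ?case using Ma by (metis Mset.Ma)
qed

lemma M_actf: "\<phi> \<in> Mset V \<pi> \<Longrightarrow> actf h \<phi> \<in> Mset V \<pi>"
proof (induction rule: Mset.induct)
  case Mz
  then show ?case by (simp add: actf_def zero_fun_def[symmetric] Mset.Mz)
next
  case (Mg v g)
  then show ?case using Mset.Mg[where V=V and \<pi>=\<pi> and v=v and g="h * g"] by (simp add: actf_def mult.assoc)
next
  case (Ma \<phi> \<psi>)
  have "actf h (\<phi> + \<psi>) = actf h \<phi> + actf h \<psi>"
    by (simp add: actf_def fun_eq_iff)
  then show ?case using Ma by (metis Mset.Ma)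
qed

lemma M_Tf: "\<phi> \<in> Mset V \<pi> \<Longrightarrow> Tf \<pi> \<phi> \<in> Mset V \<pi>"
  using Mset.Mg[where V=V and \<pi>=\<pi> and v="\<phi> 1" and g=1] by (simp add: Tf_def)

lemma vsf: "vector_space (smf sv)"
  unfolding vector_space_def smf_def
  by (simp add: fun_eq_iff module.scale_right_distrib[OF modv] module.scale_left_distrib[OF modv] module.scale_scale[OF modv] module.scale_one[OF modv])

lemma part3_obj: "T_object sh cop S (smf sv) (Mset V \<pi>) actf (Tf \<pi>)"
proof -
  have modf: "module (smf sv)" using vsf by (simp add: module_iff_vector_space)
  have sub: "module.subspace (smf sv) (Mset V \<pi>)"
    unfolding module.subspace_def[OF modf] by (auto intro: Mset.Mz Mset.Ma M_smf)
  have hm: "hmodule sh (smf sv) (Mset V \<pi>) actf"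
    unfolding hmodule_def
  proof (intro conjI ballI allI)
    show "linear_on (smf sv) (Mset V \<pi>) (smf sv) (Mset V \<pi>) (actf h)" for h
      unfolding linear_on_def using M_actf[unfolded actf_def] by (auto simp: actf_def smf_def)
  qed (auto simp: vsf sub actf_def smf_def fun_eq_iff Madd' Msc' distrib_left hsmult(2)[OF hopf, symmetric] mult.assoc)
  have c: "Tconj cop S actf (Tf \<pi>) h (Tf \<pi> \<phi>) = Tf \<pi> (Tconj cop S actf (Tf \<pi>) h \<phi>)"
    if "\<phi> \<in> Mset V \<pi>" for h \<phi>
    using that by (simp add: fun_eq_iff Tconj_def sweedler_apply actf_def Tf_def MP4)
  show ?thesis
    unfolding T_object_def
  proof (intro conjI ballI allI)
    show "linear_on (smf sv) (Mset V \<pi>) (smf sv) (Mset V \<pi>) (Tf \<pi>)"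
      unfolding linear_on_def using M_Tf[unfolded Tf_def] by (auto simp: Tf_def smf_def)
    show "hmodule sh (smf sv) (Mset V \<pi>) actf" by (rule hm)
    show "Tf \<pi> (Tf \<pi> x) = Tf \<pi> x" if "x \<in> Mset V \<pi>" for x using that by (simp add: Tf_def)
    show "Tconj cop S actf (Tf \<pi>) h (Tf \<pi> x) = Tf \<pi> (Tconj cop S actf (Tf \<pi>) h x)"
      if "x \<in> Mset V \<pi>" for h x by (rule c[OF that])
  qed
qed

lemma part3_iso: "partial_module_iso (smf sv) (Tf \<pi> ` Mset V \<pi>) (piT actf (Tf \<pi>)) sv V \<pi> (\<lambda>\<phi>. \<phi> 1)"
proof -
  have TM: "\<psi> \<in> Tf \<pi> ` Mset V \<pi> \<longleftrightarrow> (\<exists>v\<in>V. \<psi> = (\<lambda>k. \<pi> k v))" for \<psi>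
  proof
    assume "\<psi> \<in> Tf \<pi> ` Mset V \<pi>"
    then show "\<exists>v\<in>V. \<psi> = (\<lambda>k. \<pi> k v)" by (auto simp: Tf_def)
  next
    assume "\<exists>v\<in>V. \<psi> = (\<lambda>k. \<pi> k v)"
    then obtain v where v: "v \<in> V" "\<psi> = (\<lambda>k. \<pi> k v)" by blast
    have "(\<lambda>k. \<pi> (k * 1) v) \<in> Mset V \<pi>" by (rule Mset.Mg[OF v(1)])
    moreover have "\<psi> = Tf \<pi> (\<lambda>k. \<pi> (k * 1) v)" using v by (simp add: Tf_def)
    ultimately show "\<psi> \<in> Tf \<pi> ` Mset V \<pi>" by blast
  qed
  show ?thesis
    unfolding partial_module_iso_def partial_module_hom_def
  proof (intro conjI exI[of _ "\<lambda>v k. \<pi> k v"])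
    show "linear_on (smf sv) (Tf \<pi> ` Mset V \<pi>) sv V (\<lambda>\<phi>. \<phi> 1)"
      unfolding linear_on_def TM by (auto simp: smf_def Tf_def)
    show "\<forall>h. \<forall>x\<in>Tf \<pi> ` Mset V \<pi>. piT actf (Tf \<pi>) h x 1 = \<pi> h (x 1)"
      unfolding TM by (auto simp: piT_def actf_def Tf_def)
    show "linear_on sv V (smf sv) (Tf \<pi> ` Mset V \<pi>) (\<lambda>v k. \<pi> k v)"
      unfolding linear_on_def TM by (auto simp: smf_def fun_eq_iff intro: Vadd Vsc)
    show "\<forall>h. \<forall>x\<in>V. (\<lambda>k. \<pi> k (\<pi> h x)) = piT actf (Tf \<pi>) h (\<lambda>k. \<pi> k x)"
      by (auto simp: piT_def actf_def Tf_def)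
    show "\<forall>x\<in>Tf \<pi> ` Mset V \<pi>. (\<lambda>k. \<pi> k (x 1)) = x"
      by (auto simp: Tf_def)
  qed (auto simp: Tf_def)
qed

end

theorem mainTheorem2:
  fixes sh :: "'k::field \<Rightarrow> 'h::ring_1 \<Rightarrow> 'h"
    and cop :: "'h \<Rightarrow> ('h \<times> 'h) list"
    and eps :: "'h \<Rightarrow> 'k"
    and S :: "'h \<Rightarrow> 'h"
  assumes hopf: "hopf_algebra sh cop eps S"
  shows
    \<comment> \<open>R is well defined on objects: R(M,T) is a partial H-module\<close>
    "(\<forall>(sm :: 'k \<Rightarrow> 'm::ab_group_add \<Rightarrow> 'm) M act T.
        T_object sh cop S sm M act T \<longrightarrow> partial_module sh cop S sm (T ` M) (piT act T))
     \<and>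
     \<comment> \<open>R (identity on morphisms) is well defined on morphisms and full; it is faithful
         since it is the identity on morphisms\<close>
     (\<forall>(sm :: 'k \<Rightarrow> 'm \<Rightarrow> 'm) M act T (sn :: 'k \<Rightarrow> 'n::ab_group_add \<Rightarrow> 'n) N act' T' f.
        T_object sh cop S sm M act T \<longrightarrow> T_object sh cop S sn N act' T' \<longrightarrow>
        (T_hom sm M act T sn N act' T' f \<longleftrightarrow>
         partial_module_hom sm (T ` M) (piT act T) sn (T' ` N) (piT act' T') f))
     \<and>
     \<comment> \<open>R is essentially surjective\<close>
     (\<forall>(sv :: 'k \<Rightarrow> 'v::ab_group_add \<Rightarrow> 'v) V \<pi>.
        partial_module sh cop S sv V \<pi> \<longrightarrow>
        (\<exists>(sm :: 'k \<Rightarrow> ('h \<Rightarrow> 'v) \<Rightarrow> ('h \<Rightarrow> 'v)) M act T f.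
           T_object sh cop S sm M act T \<and>
           partial_module_iso sm (T ` M) (piT act T) sv V \<pi> f))"
  proof (intro conjI allI impI)
  fix sm :: "'k \<Rightarrow> 'm::ab_group_add \<Rightarrow> 'm" and M act T
  assume "T_object sh cop S sm M act T"
  then show "partial_module sh cop S sm (T ` M) (piT act T)" by (rule part1[OF hopf])
next
  fix sm :: "'k \<Rightarrow> 'm \<Rightarrow> 'm" and M act T and sn :: "'k \<Rightarrow> 'n::ab_group_add \<Rightarrow> 'n" and N act' T' f
  show "T_hom sm M act T sn N act' T' f =
         partial_module_hom sm (T ` M) (piT act T) sn (T' ` N) (piT act' T') f"
    by (simp add: T_hom_def partial_module_hom_def piT_def)
next
  fix sv :: "'k \<Rightarrow> 'v::ab_group_add \<Rightarrow> 'v" and V \<pi>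
  assume PM: "partial_module sh cop S sv V \<pi>"
  show "\<exists>(sm :: 'k \<Rightarrow> ('h \<Rightarrow> 'v) \<Rightarrow> ('h \<Rightarrow> 'v)) M act T f.
           T_object sh cop S sm M act T \<and>
           partial_module_iso sm (T ` M) (piT act T) sv V \<pi> f"
    using part3_obj[OF hopf PM] part3_iso[OF hopf PM] by blast
qed

end
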